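(* Let $K$ be a number field with ring of integers $R$, and suppose $R$ is not a unique factorization domain. Then there exists a polynomial $f\in R[x]$ of degree at least $2$ that is indecomposable over $R$ but decomposable over $K$.
   Context: For a ring $A$ and $f\in A[x]$ with $\deg f\ge 2$, $f$ is called decomposable over $A$ if $f(x)=g(h(x))$ for some $g,h\in A[x]$ of degree at least $2$, and indecomposable over $A$ otherwise. *)

theory Defs
  imports "HOL-Computational_Algebra.Polynomial" "HOL-Algebra.Ring_Divisibility"
begin

text \<open>A number field, realised (up to isomorphism) as a subfield of the complex numbers
  that is finite-dimensional as a vector space over the rationals.\<close>
definition number_field :: "complex set \<Rightarrow> bool" where
  "number_field K \<longleftrightarrow>
     0 \<in> K \<and> 1 \<in> K \<and>
     (\<forall>x\<in>K. \<forall>y\<in>K. x + y \<in> K \<and> x - y \<in> K \<and> x * y \<in> K) \<and>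
     (\<forall>x\<in>K. x \<noteq> 0 \<longrightarrow> inverse x \<in> K) \<and>
     (\<exists>B. finite B \<and> B \<subseteq> K \<and> (\<forall>x\<in>K. \<exists>c. x = (\<Sum>b\<in>B. of_rat (c b) * b)))"

definition algebraic_integer :: "complex \<Rightarrow> bool" where
  "algebraic_integer x \<longleftrightarrow>
     (\<exists>p :: int poly. lead_coeff p = 1 \<and> poly (map_poly of_int p) x = 0)"

definition ring_of_integers :: "complex set \<Rightarrow> complex set" where
  "ring_of_integers K = {x \<in> K. algebraic_integer x}"

definition subring_structure :: "complex set \<Rightarrow> complex ring" where
  "subring_structure S = \<lparr>carrier = S, monoid.mult = (*), one = 1, zero = 0, add = (+)\<rparr>"

definition poly_over :: "complex set \<Rightarrow> complex poly \<Rightarrow> bool" where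
  "poly_over A p \<longleftrightarrow> (\<forall>i. Polynomial.coeff p i \<in> A)"

definition decomposable_over :: "complex set \<Rightarrow> complex poly \<Rightarrow> bool" where
  "decomposable_over A f \<longleftrightarrow>
     Polynomial.degree f \<ge> 2 \<and>
     (\<exists>g h. poly_over A g \<and> poly_over A h \<and> Polynomial.degree g \<ge> 2 \<and> Polynomial.degree h \<ge> 2 \<and>
            f = pcompose g h)"

definition indecomposable_over :: "complex set \<Rightarrow> complex poly \<Rightarrow> bool" where
  "indecomposable_over A f \<longleftrightarrow> Polynomial.degree f \<ge> 2 \<and> \<not> decomposable_over A f"

end

theory Submission
  imports Defs "Jordan_Normal_Form.Char_Poly"
begin


lemma eig_trick:
  fixes x :: complex and I :: "'i set" and w :: "'i \<Rightarrow> complex" and A :: "'i \<Rightarrow> 'i \<Rightarrow> int"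
  assumes fin: "finite I" and i0: "i0 \<in> I" "w i0 \<noteq> 0"
    and act: "\<And>i. i \<in> I \<Longrightarrow> x * w i = (\<Sum>j\<in>I. of_int (A i j) * w j)"
  shows "algebraic_int x"
proof -
  define n where "n = card I"
  obtain f where f: "bij_betw f {0..<n} I" using ex_bij_betw_nat_finite[OF fin] n_def by blast
  define Am :: "int mat" where "Am = mat n n (\<lambda>(i,j). A (f i) (f j))"
  define v where "v = vec n (\<lambda>i. w (f i))"
  have Am: "Am \<in> carrier_mat n n" unfolding Am_def by simp
  have Bm: "map_mat of_int Am \<in> carrier_mat n n" using Am by simp
  obtain k where k: "k < n" "f k = i0" using f i0 unfolding bij_betw_def by (metis atLeastLessThan_iff imageE)
  have "eigenvector (map_mat of_int Am) v x"
    unfolding eigenvector_def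
  proof (intro conjI)
    show "v \<in> carrier_vec (dim_row (map_mat of_int Am))" unfolding v_def Am_def by simp
    show "v \<noteq> 0\<^sub>v (dim_row (map_mat of_int Am))"
    proof
      assume "v = 0\<^sub>v (dim_row (map_mat of_int Am))"
      hence "v $ k = 0" using k Am by simp
      thus False using k i0 unfolding v_def by simp
    qed
    show "map_mat of_int Am *\<^sub>v v = x \<cdot>\<^sub>v v"
    proof (rule eq_vecI)
      fix i assume "i < dim_vec (x \<cdot>\<^sub>v v)"
      hence i: "i < n" unfolding v_def by simp
      have fi: "f i \<in> I" using f i unfolding bij_betw_def by auto
      have "(map_mat of_int Am *\<^sub>v v) $ i = (\<Sum>j\<in>{0..<n}. of_int (A (f i) (f j)) * w (f j))"
        using i unfolding mult_mat_vec_def scalar_prod_def Am_def v_def by (simp add: row_def)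
      also have "\<dots> = (\<Sum>j\<in>I. of_int (A (f i) j) * w j)"
        using sum.reindex_bij_betw[OF f, of "\<lambda>j. of_int (A (f i) j) * w j"] by simp
      also have "\<dots> = x * w (f i)" using act[OF fi] by simp
      finally show "(map_mat of_int Am *\<^sub>v v) $ i = (x \<cdot>\<^sub>v v) $ i" using i unfolding v_def by simp
    qed (simp add: v_def Am_def)
  qed
  hence "eigenvalue (map_mat of_int Am) x" unfolding eigenvalue_def by blast
  hence "poly (char_poly (map_mat of_int Am)) x = 0" using eigenvalue_root_char_poly[OF Bm] by blast
  hence "poly (of_int_poly (char_poly Am)) x = 0" using of_int_hom.char_poly_hom[OF Am] by metis
  moreover have "lead_coeff (char_poly Am) = 1" using degree_monic_char_poly[OF Am] by simp
  ultimately show ?thesis unfolding algebraic_int_altdef_ipoly by blast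
qed

definition IA :: "complex \<Rightarrow> 'i set \<Rightarrow> ('i \<Rightarrow> complex) \<Rightarrow> bool" where
  "IA x I w \<longleftrightarrow> (\<exists>A::'i\<Rightarrow>'i\<Rightarrow>int. \<forall>i\<in>I. x * w i = (\<Sum>j\<in>I. of_int (A i j) * w j))"

lemma IA_add: assumes "IA x I w" "IA y I w" shows "IA (x+y) I w"
proof -
  obtain A where A: "\<forall>i\<in>I. x * w i = (\<Sum>j\<in>I. of_int (A i j) * w j)" using assms(1) unfolding IA_def by blast
  obtain B where B: "\<forall>i\<in>I. y * w i = (\<Sum>j\<in>I. of_int (B i j) * w j)" using assms(2) unfolding IA_def by blast
  show ?thesis unfolding IA_def
    by (rule exI[of _ "\<lambda>i j. A i j + B i j"]) (auto simp: A B distrib_right sum.distrib)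
qed

lemma IA_mult: assumes "IA x I w" "IA y I w" shows "IA (x*y) I w"
proof -
  obtain A where A: "\<forall>i\<in>I. x * w i = (\<Sum>j\<in>I. of_int (A i j) * w j)" using assms(1) unfolding IA_def by blast
  obtain B where B: "\<forall>i\<in>I. y * w i = (\<Sum>j\<in>I. of_int (B i j) * w j)" using assms(2) unfolding IA_def by blast
  show ?thesis unfolding IA_def
  proof (rule exI[of _ "\<lambda>i k. \<Sum>j\<in>I. B i j * A j k"], intro ballI)
    fix i assume i: "i \<in> I"
    have "x * y * w i = x * (\<Sum>j\<in>I. of_int (B i j) * w j)" using B i by (simp add: mult.assoc)
    also have "\<dots> = (\<Sum>j\<in>I. of_int (B i j) * (x * w j))" by (simp add: sum_distrib_left algebra_simps)
    also have "\<dots> = (\<Sum>j\<in>I. of_int (B i j) * (\<Sum>k\<in>I. of_int (A j k) * w k))"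
      using A by (intro sum.cong) auto
    also have "\<dots> = (\<Sum>j\<in>I. \<Sum>k\<in>I. of_int (B i j) * of_int (A j k) * w k)"
      by (simp add: sum_distrib_left mult.assoc)
    also have "\<dots> = (\<Sum>k\<in>I. \<Sum>j\<in>I. of_int (B i j) * of_int (A j k) * w k)"
      by (rule sum.swap)
    also have "\<dots> = (\<Sum>k\<in>I. of_int (\<Sum>j\<in>I. B i j * A j k) * w k)"
      by (simp add: sum_distrib_right)
    finally show "x * y * w i = (\<Sum>k\<in>I. of_int (\<Sum>j\<in>I. B i j * A j k) * w k)" .
  qed
qed

lemma IA_left: assumes "IA x I u" "finite J" shows "IA x (I \<times> J) (\<lambda>(a,b). u a * v b)"
proof -
  obtain A where A: "\<forall>i\<in>I. x * u i = (\<Sum>j\<in>I. of_int (A i j) * u j)" using assms(1) unfolding IA_def by blast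
  show ?thesis unfolding IA_def
  proof (rule exI[of _ "\<lambda>(a,b) (c,d). if b = d then A a c else 0"], intro ballI)
    fix p assume p: "p \<in> I \<times> J"
    obtain a b where ab: "p = (a,b)" "a \<in> I" "b \<in> J" using p by auto
    have "x * (u a * v b) = (\<Sum>c\<in>I. of_int (A a c) * u c) * v b" using A ab by (simp add: mult.assoc[symmetric])
    also have "\<dots> = (\<Sum>c\<in>I. of_int (A a c) * (u c * v b))"
      by (simp add: sum_distrib_right mult.assoc)
    also have "\<dots> = (\<Sum>c\<in>I. \<Sum>d\<in>J. (if d = b then of_int (A a c) * (u c * v d) else 0))"
      using ab(3) assms(2) by simp
    also have "\<dots> = (\<Sum>c\<in>I. \<Sum>d\<in>J. (if b = d then of_int (A a c) else 0) * (u c * v d))"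
      by (intro sum.cong) auto
    also have "\<dots> = (\<Sum>q\<in>I \<times> J. of_int ((\<lambda>(a,b) (c,d). if b = d then A a c else 0) p q) * (\<lambda>(a,b). u a * v b) q)"
      unfolding sum.cartesian_product ab by (intro sum.cong) auto
    finally show "x * (\<lambda>(a,b). u a * v b) p = (\<Sum>q\<in>I \<times> J. of_int ((\<lambda>(a,b) (c,d). if b = d then A a c else 0) p q) * (\<lambda>(a,b). u a * v b) q)"
      using ab by simp
  qed
qed

lemma IA_right: assumes "IA y J v" "finite I" shows "IA y (I \<times> J) (\<lambda>(a,b). u a * v b)"
proof -
  obtain B where B: "\<forall>i\<in>J. y * v i = (\<Sum>j\<in>J. of_int (B i j) * v j)" using assms(1) unfolding IA_def by blast
  show ?thesis unfolding IA_def
  proof (rule exI[of _ "\<lambda>(a,b) (c,d). if a = c then B b d else 0"], intro ballI)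
    fix p assume p: "p \<in> I \<times> J"
    obtain a b where ab: "p = (a,b)" "a \<in> I" "b \<in> J" using p by auto
    have "y * (u a * v b) = u a * (\<Sum>d\<in>J. of_int (B b d) * v d)" using B ab by (simp add: algebra_simps)
    also have "\<dots> = (\<Sum>c\<in>I. (if c = a then (\<Sum>d\<in>J. of_int (B b d) * (u c * v d)) else 0))"
      using ab(2) assms(2) by (simp add: sum_distrib_left algebra_simps)
    also have "\<dots> = (\<Sum>c\<in>I. \<Sum>d\<in>J. (if a = c then of_int (B b d) else 0) * (u c * v d))"
      by (intro sum.cong) auto
    also have "\<dots> = (\<Sum>q\<in>I \<times> J. of_int ((\<lambda>(a,b) (c,d). if a = c then B b d else 0) p q) * (\<lambda>(a,b). u a * v b) q)"
      unfolding sum.cartesian_product ab by (intro sum.cong) auto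
    finally show "y * (\<lambda>(a,b). u a * v b) p = (\<Sum>q\<in>I \<times> J. of_int ((\<lambda>(a,b) (c,d). if a = c then B b d else 0) p q) * (\<lambda>(a,b). u a * v b) q)"
      using ab by simp
  qed
qed

lemma pow_IA:
  assumes "algebraic_int (x::complex)"
  shows "\<exists>m>0. IA x {..<m} (\<lambda>a. x^a)"
proof -
  obtain p where p: "poly (of_int_poly p) x = 0" "lead_coeff p = 1"
    using assms unfolding algebraic_int_altdef_ipoly by blast
  define m where "m = degree p"
  have m0: "m > 0"
  proof (rule ccontr)
    assume "\<not> m > 0"
    hence "degree p = 0" unfolding m_def by simp
    hence "p = [:1:]" using p(2) by (metis degree_eq_zeroE lead_coeff_pCons(2) pCons_0_0)
    thus False using p(1) by simp
  qed
  have deg: "degree (of_int_poly p :: complex poly) = m" unfolding m_def by simp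
  have "0 = (\<Sum>i\<le>m. of_int (Polynomial.coeff p i) * x^i)"
    using p(1) unfolding poly_altdef deg by simp
  also have "\<dots> = (\<Sum>i<m. of_int (Polynomial.coeff p i) * x^i) + x^m"
    using p(2) unfolding m_def by (simp add: lessThan_Suc_atMost[symmetric])
  finally have xm: "x^m = (\<Sum>i<m. of_int (- Polynomial.coeff p i) * x^i)"
    by (simp add: sum_negf eq_neg_iff_add_eq_0 add.commute)
  define S where "S = (\<lambda>a c. if a + 1 < m then (if c = a + 1 then 1 else 0) else - Polynomial.coeff p c)"
  have "IA x {..<m} (\<lambda>a. x^a)" unfolding IA_def
  proof (rule exI[of _ S], intro ballI)
    fix a assume a: "a \<in> {..<m}"
    show "x * x^a = (\<Sum>c\<in>{..<m}. of_int (S a c) * x^c)"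
    proof (cases "a + 1 < m")
      case True
      have "(\<Sum>c\<in>{..<m}. of_int (S a c) * x^c) = (\<Sum>c\<in>{..<m}. if c = a + 1 then x^c else 0)"
        unfolding S_def using True by (intro sum.cong) auto
      also have "\<dots> = x^(a+1)" using True by (simp add: sum.delta)
      finally show ?thesis by simp
    next
      case False
      hence "a + 1 = m" using a by simp
      hence "x * x^a = x^m" by (metis power_Suc Suc_eq_plus1)
      also have "\<dots> = (\<Sum>c\<in>{..<m}. of_int (S a c) * x^c)" unfolding xm S_def using False by simp
      finally show ?thesis .
    qed
  qed
  with m0 show ?thesis by blast
qed

lemma algebraic_int_add_mult:
  assumes "algebraic_int (x::complex)" "algebraic_int y"
  shows "algebraic_int (x + y) \<and> algebraic_int (x * y)"
proof -
  obtain m where m: "m > 0" "IA x {..<m} (\<lambda>a. x^a)" using pow_IA[OF assms(1)] by blast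
  obtain n where n: "n > 0" "IA y {..<n} (\<lambda>a. y^a)" using pow_IA[OF assms(2)] by blast
  let ?I = "{..<m} \<times> {..<n}" and ?w = "\<lambda>(a,b). x^a * y^b"
  have 1: "IA x ?I ?w" by (rule IA_left[OF m(2)]) simp
  have 2: "IA y ?I ?w" by (rule IA_right[OF n(2)]) simp
  have i0: "(0,0) \<in> ?I" "?w (0,0) \<noteq> 0" using m n by auto
  show ?thesis
  proof
    obtain A where "\<forall>i\<in>?I. (x+y) * ?w i = (\<Sum>j\<in>?I. of_int (A i j) * ?w j)"
      using IA_add[OF 1 2] unfolding IA_def by blast
    thus "algebraic_int (x + y)" using eig_trick[of ?I "(0,0)" ?w "x+y" A] i0 by auto
  next
    obtain A where "\<forall>i\<in>?I. (x*y) * ?w i = (\<Sum>j\<in>?I. of_int (A i j) * ?w j)"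
      using IA_mult[OF 1 2] unfolding IA_def by blast
    thus "algebraic_int (x * y)" using eig_trick[of ?I "(0,0)" ?w "x*y" A] i0 by auto
  qed
qed

lemma algebraic_int_add: "algebraic_int (x::complex) \<Longrightarrow> algebraic_int y \<Longrightarrow> algebraic_int (x + y)"
  using algebraic_int_add_mult by blast
lemma algebraic_int_mult: "algebraic_int (x::complex) \<Longrightarrow> algebraic_int y \<Longrightarrow> algebraic_int (x * y)"
  using algebraic_int_add_mult by blast
lemma algebraic_int_diff: "algebraic_int (x::complex) \<Longrightarrow> algebraic_int y \<Longrightarrow> algebraic_int (x - y)"
  using algebraic_int_add[of x "-y"] by auto
lemma algebraic_int_1: "algebraic_int (1::complex)"
  by (rule int_imp_algebraic_int) simp
lemma algebraic_int_of_int: "algebraic_int (of_int k::complex)"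
  by (rule int_imp_algebraic_int) simp
lemma algebraic_int_power: "algebraic_int (x::complex) \<Longrightarrow> algebraic_int (x ^ k)"
  by (induction k) (auto intro: algebraic_int_mult algebraic_int_1)
lemma algebraic_int_sum: "(\<And>i. i \<in> S \<Longrightarrow> algebraic_int (f i :: complex)) \<Longrightarrow> algebraic_int (sum f S)"
  by (induction S rule: infinite_finite_induct) (auto intro: algebraic_int_add)

lemma algebraic_integer_iff: "algebraic_integer x \<longleftrightarrow> algebraic_int x"
  unfolding algebraic_integer_def algebraic_int_altdef_ipoly by auto



definition qspan :: "complex set \<Rightarrow> complex set \<Rightarrow> bool" where
  "qspan K B \<longleftrightarrow> (\<forall>x\<in>K. \<exists>c. x = (\<Sum>b\<in>B. of_rat (c b) * b))"

definition qindep :: "complex set \<Rightarrow> bool" where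
  "qindep B \<longleftrightarrow> (\<forall>c. (\<Sum>b\<in>B. of_rat (c b) * b) = 0 \<longrightarrow> (\<forall>b\<in>B. c b = 0))"

lemma min_span:
  assumes "finite B" "qspan K B"
  shows "\<exists>B0\<subseteq>B. qspan K B0 \<and> qindep B0"
  using assms
proof (induction "card B" arbitrary: B rule: less_induct)
  case less
  show ?case
  proof (cases "qindep B")
    case True thus ?thesis using less by blast
  next
    case False
    then obtain c b0 where c: "(\<Sum>b\<in>B. of_rat (c b) * b) = 0" "b0 \<in> B" "c b0 \<noteq> 0"
      unfolding qindep_def by blast
    define B' where "B' = B - {b0}"
    have fin': "finite B'" using less unfolding B'_def by simp
    have card': "card B' < card B" unfolding B'_def using less(2) c(2) by (metis card_Diff1_less)
    have sp: "(\<Sum>b\<in>B. of_rat (c b) * b) = of_rat (c b0) * b0 + (\<Sum>b\<in>B'. of_rat (c b) * b)"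
      unfolding B'_def using less(2) c(2) by (simp add: sum.remove)
    have b0: "b0 = (\<Sum>b\<in>B'. of_rat (- c b / c b0) * b)"
    proof -
      have "of_rat (c b0) * b0 = - (\<Sum>b\<in>B'. of_rat (c b) * b)" using c(1) sp by (simp add: eq_neg_iff_add_eq_0)
      hence "b0 = - (\<Sum>b\<in>B'. of_rat (c b) * b) / of_rat (c b0)" using c(3) by (simp add: field_simps)
      thus ?thesis by (simp add: sum_divide_distrib sum_negf of_rat_divide of_rat_minus)
    qed
    have "qspan K B'" unfolding qspan_def
    proof
      fix x assume "x \<in> K"
      then obtain d where d: "x = (\<Sum>b\<in>B. of_rat (d b) * b)" using less(3) unfolding qspan_def by blast
      have "x = of_rat (d b0) * b0 + (\<Sum>b\<in>B'. of_rat (d b) * b)"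
        unfolding d B'_def using less(2) c(2) by (simp add: sum.remove)
      also have "of_rat (d b0) * b0 = of_rat (d b0) * (\<Sum>b\<in>B'. of_rat (- c b / c b0) * b)"
        by (simp only: b0[symmetric])
      also have "\<dots> = (\<Sum>b\<in>B'. of_rat (d b0 * (- c b / c b0)) * b)"
        unfolding sum_distrib_left by (intro sum.cong refl) (simp only: of_rat_mult mult.assoc)
      also have "\<dots> + (\<Sum>b\<in>B'. of_rat (d b) * b) = (\<Sum>b\<in>B'. of_rat (d b - d b0 * c b / c b0) * b)"
        unfolding sum.distrib[symmetric] by (intro sum.cong refl) (simp add: of_rat_diff of_rat_minus left_diff_distrib)
      finally show "\<exists>c. x = (\<Sum>b\<in>B'. of_rat (c b) * b)" by (rule exI[of _ "\<lambda>b. d b - d b0 * c b / c b0"])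
    qed
    from less(1)[OF card' fin' this] show ?thesis unfolding B'_def by blast
  qed
qed

lemma qindep_zero: "qindep B \<Longrightarrow> finite B \<Longrightarrow> 0 \<notin> B"
proof
  assume a: "qindep B" "finite B" "0 \<in> B"
  define c :: "complex \<Rightarrow> rat" where "c = (\<lambda>b. if b = 0 then 1 else 0)"
  have "(\<Sum>b\<in>B. of_rat (c b) * b) = 0"
    unfolding c_def by (intro sum.neutral) simp
  hence "c 0 = 0" using a(1,3) unfolding qindep_def by blast
  thus False unfolding c_def by simp
qed

locale nf_basis =
  fixes K :: "complex set" and n :: nat and b :: "nat \<Rightarrow> complex"
  assumes nf: "number_field K"
    and bK: "\<And>i. i < n \<Longrightarrow> b i \<in> K"
    and span: "\<And>x. x \<in> K \<Longrightarrow> \<exists>c. x = (\<Sum>i<n. of_rat (c i) * b i)"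
    and indep: "\<And>c. (\<Sum>i<n. of_rat (c i) * b i) = 0 \<Longrightarrow> i < n \<Longrightarrow> c i = 0"

lemma nf_basis_exists:
  assumes "number_field K" shows "\<exists>n b. nf_basis K n b"
proof -
  obtain B where B: "finite B" "B \<subseteq> K" "\<forall>x\<in>K. \<exists>c. x = (\<Sum>b\<in>B. of_rat (c b) * b)"
    using assms unfolding number_field_def by blast
  obtain B0 where B0: "B0 \<subseteq> B" "qspan K B0" "qindep B0"
    using min_span[OF B(1)] B(3) unfolding qspan_def by blast
  have fin: "finite B0" using B0(1) B(1) finite_subset by blast
  obtain bs where bs: "set bs = B0" "distinct bs" using finite_distinct_list[OF fin] by blast
  define n where "n = length bs"
  have bij: "bij_betw ((!) bs) {..<n} B0" using bij_betw_nth[OF bs(2)] bs(1) n_def by simp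
  have conv: "\<And>f. (\<Sum>x\<in>B0. f x) = (\<Sum>i<n. f (bs ! i))"
    using sum.reindex_bij_betw[OF bij] by metis
  have "nf_basis K n ((!) bs)"
  proof (unfold_locales)
    show "number_field K" by fact
    show "bs ! i \<in> K" if "i < n" for i
    proof -
      have "bs ! i \<in> set bs" using that unfolding n_def by (rule nth_mem)
      hence "bs ! i \<in> B0" using bs(1) by simp
      thus ?thesis using B0(1) B(2) by blast
    qed
    show "\<exists>c. x = (\<Sum>i<n. of_rat (c i) * bs ! i)" if "x \<in> K" for x
    proof -
      have "\<exists>c. x = (\<Sum>b\<in>B0. of_rat (c b) * b)" using B0(2) that unfolding qspan_def by (rule bspec)
      then obtain c where c: "x = (\<Sum>b\<in>B0. of_rat (c b) * b)" by (elim exE)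
      have "(\<Sum>b\<in>B0. of_rat (c b) * b) = (\<Sum>i<n. of_rat (c (bs!i)) * bs ! i)" by (rule conv)
      with c have "x = (\<Sum>i<n. of_rat (c (bs!i)) * bs ! i)" by (rule trans)
      thus ?thesis by (rule exI[of _ "\<lambda>i. c (bs!i)"])
    qed
    show "c i = 0" if "(\<Sum>i<n. of_rat (c i) * bs ! i) = 0" "i < n" for c i
    proof -
      define d where "d = (\<lambda>x. c (THE i. i < n \<and> bs ! i = x))"
      have the: "(THE j. j < n \<and> bs ! j = bs ! i) = i" if "i < n" for i
        by (rule the_equality) (use that bs(2) n_def in \<open>auto simp: nth_eq_iff_index_eq\<close>)
      have "(\<Sum>x\<in>B0. of_rat (d x) * x) = (\<Sum>i<n. of_rat (c i) * bs ! i)"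
        unfolding conv d_def by (intro sum.cong refl) (simp add: the)
      hence "(\<Sum>x\<in>B0. of_rat (d x) * x) = 0" using that(1) by simp
      hence "\<forall>x\<in>B0. d x = 0" using B0(3)[unfolded qindep_def, rule_format, of d] by blast
      hence "d (bs ! i) = 0" using that(2) bs(1) n_def by auto
      thus ?thesis using the[OF that(2)] unfolding d_def by simp
    qed
  qed
  thus ?thesis by blast
qed



context nf_basis
begin

lemma K_0: "0 \<in> K" and K_1: "1 \<in> K"
  using nf unfolding number_field_def by auto
lemma K_add: "x \<in> K \<Longrightarrow> y \<in> K \<Longrightarrow> x + y \<in> K"
  and K_diff: "x \<in> K \<Longrightarrow> y \<in> K \<Longrightarrow> x - y \<in> K"
  and K_mult: "x \<in> K \<Longrightarrow> y \<in> K \<Longrightarrow> x * y \<in> K"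
  using nf unfolding number_field_def by auto
lemma K_inverse: "x \<in> K \<Longrightarrow> inverse x \<in> K"
  using nf K_0 unfolding number_field_def by (cases "x = 0") auto
lemma K_uminus: "x \<in> K \<Longrightarrow> - x \<in> K"
  using K_diff[OF K_0] by simp
lemma K_divide: "x \<in> K \<Longrightarrow> y \<in> K \<Longrightarrow> x / y \<in> K"
  using K_mult K_inverse by (simp add: divide_inverse)
lemma K_of_nat: "of_nat k \<in> K"
  by (induction k) (auto intro: K_add K_0 K_1)
lemma K_of_int: "of_int k \<in> K"
proof (cases "k \<ge> 0")
  case True
  hence "(of_int k :: complex) = of_nat (nat k)" by simp
  thus ?thesis using K_of_nat by simp
next
  case False
  hence "(of_int k :: complex) = - of_nat (nat (-k))" by simp
  thus ?thesis using K_of_nat K_uminus by simp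
qed
lemma K_of_rat: "of_rat q \<in> K"
proof -
  obtain a c where "q = Rat.Fract a c" "c \<noteq> 0" by (cases q) auto
  hence "of_rat q = (of_int a / of_int c :: complex)" by (simp add: of_rat_rat)
  thus ?thesis using K_divide K_of_int by simp
qed
lemma K_power: "x \<in> K \<Longrightarrow> x ^ k \<in> K"
  by (induction k) (auto intro: K_mult K_1)
lemma K_sum: "(\<And>i. i \<in> S \<Longrightarrow> f i \<in> K) \<Longrightarrow> sum f S \<in> K"
  by (induction S rule: infinite_finite_induct) (auto intro: K_add K_0)

definition coord :: "complex \<Rightarrow> nat \<Rightarrow> rat" where
  "coord x = (SOME c. x = (\<Sum>i<n. of_rat (c i) * b i))"

lemma coord: "x \<in> K \<Longrightarrow> x = (\<Sum>i<n. of_rat (coord x i) * b i)"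
  unfolding coord_def by (rule someI_ex[OF span])

lemma coord_unique:
  assumes "x \<in> K" "x = (\<Sum>i<n. of_rat (c i) * b i)" "i < n"
  shows "c i = coord x i"
proof -
  have "(\<Sum>i<n. of_rat (c i - coord x i) * b i) = (\<Sum>i<n. of_rat (c i) * b i) - (\<Sum>i<n. of_rat (coord x i) * b i)"
    by (simp add: of_rat_diff left_diff_distrib sum_subtractf)
  also have "\<dots> = 0" using assms(2) coord[OF assms(1)] by simp
  finally have "c i - coord x i = 0" using indep[of "\<lambda>i. c i - coord x i"] assms(3) by blast
  thus ?thesis by simp
qed

lemma b_nonzero: "i < n \<Longrightarrow> b i \<noteq> 0"
proof
  assume i: "i < n" "b i = 0"
  have "(\<Sum>j<n. of_rat (if j = i then 1 else 0) * b j) = 0"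
    by (intro sum.neutral) (use i in auto)
  hence "(if i = i then 1 else 0 :: rat) = 0" using indep[of "\<lambda>j. if j = i then 1 else 0"] i(1) by blast
  thus False by simp
qed

lemma n_pos: "n > 0"
proof (rule ccontr)
  assume "\<not> n > 0"
  hence "n = 0" by simp
  have "(1::complex) = (\<Sum>i<n. of_rat (coord 1 i) * b i)" using coord[OF K_1] .
  also have "\<dots> = 0" using \<open>n = 0\<close> by simp
  finally show False by simp
qed

definition Q :: "complex \<Rightarrow> rat mat" where
  "Q x = mat n n (\<lambda>(i,j). coord (x * b i) j)"

lemma Q_carrier[simp]: "Q x \<in> carrier_mat n n"
  unfolding Q_def by simp

lemma Q_dims[simp]: "dim_row (Q x) = n" "dim_col (Q x) = n"
  unfolding Q_def by simp_all

lemma Q_index: "i < n \<Longrightarrow> j < n \<Longrightarrow> Q x $$ (i,j) = coord (x * b i) j"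
  unfolding Q_def by simp

lemma Q_act: "x \<in> K \<Longrightarrow> i < n \<Longrightarrow> x * b i = (\<Sum>j<n. of_rat (Q x $$ (i,j)) * b j)"
  using coord[OF K_mult[OF _ bK]] by (simp add: Q_index)

lemma Q_eqI:
  assumes "x \<in> K" "\<And>i. i < n \<Longrightarrow> x * b i = (\<Sum>j<n. of_rat (A $$ (i,j)) * b j)" "A \<in> carrier_mat n n"
  shows "Q x = A"
proof (rule eq_matI)
  fix i j assume ij: "i < dim_row A" "j < dim_col A"
  hence ij': "i < n" "j < n" using assms(3) by auto
  show "Q x $$ (i, j) = A $$ (i, j)"
    unfolding Q_index[OF ij'] using coord_unique[OF K_mult[OF assms(1) bK[OF ij'(1)]] assms(2)[OF ij'(1)] ij'(2)]
    by simp
qed (use assms(3) in auto)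

lemma Q_one: "Q 1 = 1\<^sub>m n"
proof (rule Q_eqI[OF K_1])
  fix i assume i: "i < n"
  have "(\<Sum>j<n. of_rat (1\<^sub>m n $$ (i,j)) * b j) = (\<Sum>j<n. if j = i then b j else 0)"
    by (intro sum.cong refl) (use i in auto)
  also have "\<dots> = b i" using i by simp
  finally show "1 * b i = (\<Sum>j<n. of_rat (1\<^sub>m n $$ (i,j)) * b j)" by simp
qed simp

lemma Q_mult:
  assumes x: "x \<in> K" and y: "y \<in> K"
  shows "Q (x * y) = Q x * Q y"
proof (rule Q_eqI[OF K_mult[OF x y]])
  fix i assume i: "i < n"
  have "x * y * b i = y * (x * b i)" by simp
  also have "\<dots> = y * (\<Sum>j<n. of_rat (Q x $$ (i,j)) * b j)" using Q_act[OF x i] by simp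
  also have "\<dots> = (\<Sum>j<n. of_rat (Q x $$ (i,j)) * (y * b j))" by (simp add: sum_distrib_left algebra_simps)
  also have "\<dots> = (\<Sum>j<n. of_rat (Q x $$ (i,j)) * (\<Sum>k<n. of_rat (Q y $$ (j,k)) * b k))"
    by (intro sum.cong refl) (simp add: Q_act[OF y])
  also have "\<dots> = (\<Sum>j<n. \<Sum>k<n. of_rat (Q x $$ (i,j)) * of_rat (Q y $$ (j,k)) * b k)"
    by (simp add: sum_distrib_left mult.assoc)
  also have "\<dots> = (\<Sum>k<n. \<Sum>j<n. of_rat (Q x $$ (i,j)) * of_rat (Q y $$ (j,k)) * b k)"
    by (rule sum.swap)
  also have "\<dots> = (\<Sum>k<n. of_rat ((Q x * Q y) $$ (i,k)) * b k)"
  proof (intro sum.cong refl)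
    fix k assume k: "k \<in> {..<n}"
    have "(Q x * Q y) $$ (i,k) = (\<Sum>j<n. Q x $$ (i,j) * Q y $$ (j,k))"
      using i k by (simp add: scalar_prod_def atLeast0LessThan Q_index)
    thus "(\<Sum>j<n. of_rat (Q x $$ (i,j)) * of_rat (Q y $$ (j,k)) * b k) = of_rat ((Q x * Q y) $$ (i,k)) * b k"
      by (simp add: of_rat_sum of_rat_mult sum_distrib_right)
  qed
  finally show "x * y * b i = (\<Sum>k<n. of_rat ((Q x * Q y) $$ (i,k)) * b k)" .
qed (rule mult_carrier_mat[OF Q_carrier Q_carrier])

lemma Q_pow: "x \<in> K \<Longrightarrow> Q (x ^ k) = Q x ^\<^sub>m k"
proof (induction k)
  case 0 thus ?case using Q_one by simp
next
  case (Suc k)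
  have "Q (x ^ Suc k) = Q (x ^ k * x)" by (simp add: mult.commute)
  also have "\<dots> = Q (x^k) * Q x" using Q_mult[OF K_power[OF Suc.prems] Suc.prems] .
  finally show ?case using Suc by simp
qed

definition M :: "complex \<Rightarrow> complex mat" where
  "M x = map_mat of_rat (Q x)"

lemma M_carrier[simp]: "M x \<in> carrier_mat n n"
  unfolding M_def by simp

lemma M_dims[simp]: "dim_row (M x) = n" "dim_col (M x) = n"
  unfolding M_def by simp_all

lemma M_pow: "x \<in> K \<Longrightarrow> M x ^\<^sub>m k = map_mat of_rat (Q x ^\<^sub>m k)"
  unfolding M_def by (metis of_rat_hom.mat_hom_pow Q_carrier)

lemma poly_matrix_zero:
  assumes x: "x \<in> K" and p: "poly (of_int_poly p) x = 0" and i: "i < n" and j: "j < n"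
  shows "(\<Sum>k\<le>degree p. of_int (Polynomial.coeff p k) * (Q x ^\<^sub>m k) $$ (i,j)) = 0"
proof -
  let ?E = "\<lambda>j. \<Sum>k\<le>degree p. of_int (Polynomial.coeff p k) * (Q x ^\<^sub>m k) $$ (i,j)"
  have "0 = poly (of_int_poly p) x * b i" using p by simp
  also have "\<dots> = (\<Sum>k\<le>degree p. of_int (Polynomial.coeff p k) * (x^k * b i))"
    by (simp add: poly_altdef sum_distrib_right mult.assoc)
  also have "\<dots> = (\<Sum>k\<le>degree p. of_int (Polynomial.coeff p k) * (\<Sum>j<n. of_rat ((Q x ^\<^sub>m k) $$ (i,j)) * b j))"
    by (intro sum.cong refl) (simp add: Q_act[OF K_power[OF x] i] Q_pow[OF x])
  also have "\<dots> = (\<Sum>j<n. of_rat (?E j) * b j)"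
    by (simp add: sum_distrib_left sum_distrib_right of_rat_sum of_rat_mult mult.assoc sum.swap[of _ "{..<n}"])
  finally have "(\<Sum>j<n. of_rat (?E j) * b j) = 0" by simp
  from indep[OF this j] show ?thesis .
qed

lemma eigen_alg:
  assumes x: "x \<in> K" and ax: "algebraic_int x" and ev: "eigenvalue (M x) lam"
  shows "algebraic_int lam"
proof -
  obtain p where p: "poly (of_int_poly p) x = 0" "lead_coeff p = 1"
    using ax unfolding algebraic_int_altdef_ipoly by blast
  obtain v where v: "eigenvector (M x) v lam" using ev unfolding eigenvalue_def by blast
  have vc: "v \<in> carrier_vec n" "v \<noteq> 0\<^sub>v n" using v unfolding eigenvector_def by auto
  obtain i where i: "i < n" "v $ i \<noteq> 0" using vc by (metis eq_vecI carrier_vecD index_zero_vec(1,2))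
  have pw: "(M x ^\<^sub>m k *\<^sub>v v) = lam ^ k \<cdot>\<^sub>v v" for k using eigenvector_pow[OF M_carrier v] .
  have "poly (of_int_poly p) lam * v $ i = (\<Sum>k\<le>degree p. of_int (Polynomial.coeff p k) * (lam ^ k * v $ i))"
    by (simp add: poly_altdef sum_distrib_right mult.assoc)
  also have "\<dots> = (\<Sum>k\<le>degree p. of_int (Polynomial.coeff p k) * (\<Sum>j<n. of_rat ((Q x ^\<^sub>m k) $$ (i,j)) * v $ j))"
  proof (intro sum.cong refl)
    fix k
    have "lam ^ k * v $ i = (M x ^\<^sub>m k *\<^sub>v v) $ i" using pw[of k] i vc by simp
    also have "\<dots> = (\<Sum>j<n. of_rat ((Q x ^\<^sub>m k) $$ (i,j)) * v $ j)"
      using i vc by (simp add: M_pow[OF x] scalar_prod_def atLeast0LessThan)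
    finally show "of_int (Polynomial.coeff p k) * (lam ^ k * v $ i) = of_int (Polynomial.coeff p k) * (\<Sum>j<n. of_rat ((Q x ^\<^sub>m k) $$ (i,j)) * v $ j)" by simp
  qed
  also have "\<dots> = (\<Sum>j<n. of_rat (\<Sum>k\<le>degree p. of_int (Polynomial.coeff p k) * (Q x ^\<^sub>m k) $$ (i,j)) * v $ j)"
    by (simp add: sum_distrib_left sum_distrib_right of_rat_sum of_rat_mult mult.assoc sum.swap[of _ "{..<n}"])
  also have "\<dots> = 0" using poly_matrix_zero[OF x p(1) i(1)] by simp
  finally have "poly (of_int_poly p) lam = 0" using i(2) by simp
  thus ?thesis using p(2) unfolding algebraic_int_altdef_ipoly by blast
qed

lemma linear_prod_coeff_alg:
  fixes as :: "complex list"
  assumes "\<forall>a\<in>set as. algebraic_int a"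
  shows "algebraic_int (Polynomial.coeff (\<Prod>a\<leftarrow>as. [:- a, 1:]) i)"
  using assms
proof (induction as arbitrary: i)
  case Nil thus ?case by (cases i) (auto simp: algebraic_int_1)
next
  case (Cons a as)
  let ?q = "\<Prod>a\<leftarrow>as. [:- a, 1:]"
  have eq: "(\<Prod>a\<leftarrow>a#as. [:- a, 1:]) = Polynomial.smult (-a) ?q + pCons 0 ?q"
    by (simp add: mult.commute[of "[:-a,1:]"] mult_pCons_right) 
  have 1: "algebraic_int (Polynomial.coeff (pCons 0 ?q) i)"
    using Cons by (cases i) auto
  have 2: "algebraic_int (- a * Polynomial.coeff ?q i)"
    using Cons by (intro algebraic_int_mult algebraic_int_minus) auto
  have "algebraic_int (- a * Polynomial.coeff ?q i + Polynomial.coeff (pCons 0 ?q) i)"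
    by (rule algebraic_int_add[OF 2 1])
  thus ?case unfolding eq by (simp only: coeff_add coeff_smult)
qed

lemma rat_alg_int:
  assumes "algebraic_int (of_rat q :: complex)" shows "\<exists>k. q = of_int k"
proof -
  have "(of_rat q :: complex) \<in> \<int>" using rational_algebraic_int_is_int[OF assms] by simp
  then obtain k where "(of_rat q :: complex) = of_int k" by (elim Ints_cases)
  hence "q = of_int k" by (metis of_rat_eq_iff of_rat_of_int_eq)
  thus ?thesis by blast
qed

lemma charpoly_int:
  assumes x: "x \<in> K" and ax: "algebraic_int x"
  shows "char_poly (M x) = of_int_poly (map_poly floor (char_poly (Q x)))"
proof -
  have cp: "char_poly (M x) = map_poly of_rat (char_poly (Q x))"
    unfolding M_def by (metis of_rat_hom.char_poly_hom Q_carrier)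
  obtain as where as: "char_poly (M x) = (\<Prod>a\<leftarrow>as. [:- a, 1:])"
    using char_poly_factorized[OF M_carrier] by blast
  have "\<forall>a\<in>set as. algebraic_int a"
  proof
    fix a assume "a \<in> set as"
    hence "poly (char_poly (M x)) a = 0" unfolding as by (induction as) auto
    hence "eigenvalue (M x) a" using eigenvalue_root_char_poly[OF M_carrier] by blast
    thus "algebraic_int a" by (rule eigen_alg[OF x ax])
  qed
  hence alg: "algebraic_int (Polynomial.coeff (char_poly (M x)) i)" for i
    unfolding as by (rule linear_prod_coeff_alg)
  show ?thesis
  proof (rule poly_eqI)
    fix i
    have "algebraic_int (of_rat (Polynomial.coeff (char_poly (Q x)) i) :: complex)"
      using alg[of i] unfolding cp by simp
    then obtain k where k: "Polynomial.coeff (char_poly (Q x)) i = of_int k" using rat_alg_int by blast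
    show "Polynomial.coeff (char_poly (M x)) i = Polynomial.coeff (of_int_poly (map_poly floor (char_poly (Q x)))) i"
      unfolding cp by (simp add: k coeff_map_poly)
  qed
qed

lemma root_charpoly: "x \<in> K \<Longrightarrow> poly (char_poly (M x)) x = 0"
proof -
  assume x: "x \<in> K"
  have "eigenvector (M x) (vec n b) x" unfolding eigenvector_def
  proof (intro conjI)
    show "vec n b \<in> carrier_vec (dim_row (M x))" using M_carrier by (simp add: carrier_vecI)
    show "vec n b \<noteq> 0\<^sub>v (dim_row (M x))"
    proof
      assume "vec n b = 0\<^sub>v (dim_row (M x))"
      hence "vec n b $ 0 = 0" using n_pos M_carrier by (metis carrier_matD(1) index_zero_vec(1))
      thus False using b_nonzero[OF n_pos] n_pos by simp
    qed
    show "M x *\<^sub>v vec n b = x \<cdot>\<^sub>v vec n b"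
    proof (rule eq_vecI)
      fix i assume "i < dim_vec (x \<cdot>\<^sub>v vec n b)"
      hence i: "i < n" by simp
      have "(M x *\<^sub>v vec n b) $ i = (\<Sum>j<n. of_rat (Q x $$ (i,j)) * b j)"
        using i by (simp add: M_def scalar_prod_def atLeast0LessThan)
      also have "\<dots> = x * b i" using Q_act[OF x i] by simp
      finally show "(M x *\<^sub>v vec n b) $ i = (x \<cdot>\<^sub>v vec n b) $ i" using i by simp
    qed (simp add: M_def)
  qed
  hence "eigenvalue (M x) x" unfolding eigenvalue_def by blast
  thus ?thesis using eigenvalue_root_char_poly[OF M_carrier] by blast
qed

definition Nm :: "complex \<Rightarrow> rat" where
  "Nm x = det (Q x)"

lemma Nm_mult: "x \<in> K \<Longrightarrow> y \<in> K \<Longrightarrow> Nm (x * y) = Nm x * Nm y"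
  unfolding Nm_def using Q_mult det_mult[OF Q_carrier Q_carrier] by simp

lemma Nm_one: "Nm 1 = 1"
  unfolding Nm_def Q_one by simp

lemma Nm_nz: assumes "x \<in> K" "x \<noteq> 0" shows "Nm x \<noteq> 0"
proof
  assume "Nm x = 0"
  have "Nm (x * inverse x) = Nm x * Nm (inverse x)" using Nm_mult[OF assms(1) K_inverse[OF assms(1)]] .
  hence "Nm 1 = 0" using assms(2) \<open>Nm x = 0\<close> by simp
  thus False using Nm_one by simp
qed

lemma charpoly_zero: "poly (char_poly (M x)) 0 = (-1)^n * of_rat (Nm x)"
proof -
  have "poly (char_poly (M x)) 0 = det (- char_matrix (M x) 0)"
    using char_poly_matrix[OF M_carrier] by blast
  also have "- char_matrix (M x) 0 = (-1) \<cdot>\<^sub>m M x"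
    by (rule eq_matI) (auto simp: char_matrix_def)
  also have "det \<dots> = (-1)^n * det (M x)" by simp
  also have "det (M x) = of_rat (Nm x)" unfolding M_def Nm_def by (metis of_rat_hom.hom_det)
  finally show ?thesis .
qed

definition CP :: "complex \<Rightarrow> int poly" where
  "CP x = map_poly floor (char_poly (Q x))"

lemma CP: "x \<in> K \<Longrightarrow> algebraic_int x \<Longrightarrow> char_poly (M x) = of_int_poly (CP x)"
  unfolding CP_def by (rule charpoly_int)

lemma Nm_CP: assumes "x \<in> K" "algebraic_int x"
  shows "Nm x = (-1)^n * of_int (Polynomial.coeff (CP x) 0)"
proof -
  have "(of_int (Polynomial.coeff (CP x) 0) :: complex) = poly (char_poly (M x)) 0"
    using CP[OF assms] by (simp add: poly_0_coeff_0)
  also have "\<dots> = (-1)^n * of_rat (Nm x)" by (rule charpoly_zero)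
  finally have "(of_rat ((-1)^n * of_int (Polynomial.coeff (CP x) 0)) :: complex) = of_rat (Nm x)"
    by (simp add: of_rat_mult of_rat_power)
  thus ?thesis by (metis of_rat_eq_iff)
qed

lemma unit_from_norm:
  assumes x: "x \<in> K" "algebraic_int x" and N: "Nm x = 1 \<or> Nm x = -1"
  shows "algebraic_int (inverse x)"
proof -
  define P where "P = CP x"
  define c0 where "c0 = Polynomial.coeff P 0"
  have c0: "c0 * c0 = 1"
  proof -
    have "(of_int c0 :: rat) = (-1)^n * Nm x" using Nm_CP[OF x] unfolding c0_def P_def by simp
    hence "(of_int (c0 * c0) :: rat) = ((-1)^n)^2 * (Nm x * Nm x)" by (simp add: power2_eq_square algebra_simps)
    also have "\<dots> = 1" using N by (auto simp: power_mult_distrib[symmetric] power_mult[symmetric])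
    finally have "(of_int (c0 * c0) :: rat) = of_int 1" by simp
    thus ?thesis by (simp only: of_int_eq_iff)
  qed
  have degP: "degree P = n"
  proof -
    have "degree (of_int_poly P :: complex poly) = n"
      unfolding P_def CP[OF x, symmetric] using degree_monic_char_poly[OF M_carrier] by blast
    thus ?thesis by simp
  qed
  obtain m where m: "n = Suc m" using n_pos by (cases n) auto
  define S where "S = (\<Sum>i\<le>m. of_int (Polynomial.coeff P (Suc i)) * x ^ i)"
  have "0 = poly (of_int_poly P) x" unfolding P_def CP[OF x, symmetric] using root_charpoly[OF x(1)] by simp
  also have "\<dots> = (\<Sum>i\<le>Suc m. of_int (Polynomial.coeff P i) * x ^ i)"
    unfolding poly_altdef using degP m by simp
  also have "\<dots> = of_int c0 + x * S"
    unfolding sum.atMost_Suc_shift S_def c0_def by (simp add: sum_distrib_left algebra_simps)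
  finally have xS: "x * S = - of_int c0" by (simp add: eq_neg_iff_add_eq_0 add.commute)
  have "x * (- of_int c0 * S) = - of_int c0 * (x * S)" by (simp add: algebra_simps)
  also have "\<dots> = of_int (c0 * c0)" using xS by simp
  also have "\<dots> = 1" using c0 by simp
  finally have "inverse x = - of_int c0 * S" by (metis inverse_unique)
  moreover have "algebraic_int (- of_int c0 * S)"
    unfolding S_def
    by (intro algebraic_int_mult algebraic_int_minus algebraic_int_of_int algebraic_int_sum
              algebraic_int_power x(2))
  ultimately show ?thesis by simp
qed

lemma Nm_int: "x \<in> K \<Longrightarrow> algebraic_int x \<Longrightarrow> Nm x \<in> \<int>"
  using Nm_CP by simp

definition NZ :: "complex \<Rightarrow> nat" where
  "NZ x = nat \<lfloor>\<bar>Nm x\<bar>\<rfloor>"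

lemma NZ_less:
  assumes x: "x \<in> K" "algebraic_int x" "x \<noteq> 0" and c: "c \<in> K" "algebraic_int c" "c \<noteq> 0"
    and nu: "\<not> algebraic_int (inverse c)"
  shows "NZ x < NZ (x * c)"
proof -
  obtain k where k: "Nm x = of_int k" using Nm_int[OF x(1,2)] by (elim Ints_cases)
  obtain l where l: "Nm c = of_int l" using Nm_int[OF c(1,2)] by (elim Ints_cases)
  have k0: "k \<noteq> 0" using Nm_nz[OF x(1,3)] k by auto
  have l0: "l \<noteq> 0" using Nm_nz[OF c(1,3)] l by auto
  have l1: "l \<noteq> 1 \<and> l \<noteq> -1" using unit_from_norm[OF c(1,2)] nu l by auto
  have "\<bar>l\<bar> \<ge> 2" using l0 l1 by auto
  hence "\<bar>k\<bar> < \<bar>k * l\<bar>" using k0 by (simp add: abs_mult)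
  moreover have "NZ x = nat \<bar>k\<bar>" unfolding NZ_def k by (simp only: of_int_abs[symmetric] floor_of_int)
  moreover have "NZ (x * c) = nat \<bar>k * l\<bar>" unfolding NZ_def Nm_mult[OF x(1) c(1)] k l
    by (simp only: of_int_mult[symmetric] of_int_abs[symmetric] floor_of_int)
  ultimately show ?thesis using k0 l0 by simp
qed

end


lemma deg2_form: "degree (P::'a::comm_ring_1 poly) = 2 \<Longrightarrow> P = [:Polynomial.coeff P 0, Polynomial.coeff P 1, Polynomial.coeff P 2:]"
proof (rule poly_eqI)
  fix i assume d: "degree P = 2"
  show "Polynomial.coeff P i = Polynomial.coeff [:Polynomial.coeff P 0, Polynomial.coeff P 1, Polynomial.coeff P 2:] i"
  proof (cases "i \<le> 2")
    case True
    hence "i = 0 \<or> i = 1 \<or> i = 2" by auto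
    thus ?thesis by (auto simp: numeral_2_eq_2)
  next
    case False
    hence "Polynomial.coeff P i = 0" using d by (intro coeff_eq_0) simp
    moreover obtain j where "i = Suc (Suc (Suc j))" using False by (metis add_2_eq_Suc' le_add_diff_inverse2 nat_le_linear numeral_2_eq_2 Suc_leI not_less_eq_eq)
    ultimately show ?thesis by simp
  qed
qed

lemma comp_coeffs:
  fixes A B C p q r :: "'a::comm_ring_1"
  shows "Polynomial.coeff (pcompose [:C,B,A:] [:r,q,p:]) 4 = A*p^2"
    "Polynomial.coeff (pcompose [:C,B,A:] [:r,q,p:]) 3 = 2*A*p*q"
    "Polynomial.coeff (pcompose [:C,B,A:] [:r,q,p:]) 2 = A*(q^2+2*p*r) + B*p"
  by (simp_all add: pcompose_pCons eval_nat_numeral algebra_simps power2_eq_square)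

lemma f_comp:
  fixes e s t :: "'a::comm_ring_1"
  shows "pcompose [:0, e, s:] [:0, t, 1:] = [:0, e*t, e + s*t^2, 2*s*t, s:]"
  by (simp add: pcompose_pCons algebra_simps power2_eq_square)

lemma poly_over_pCons: "0 \<in> A \<Longrightarrow> poly_over A (pCons a p) \<longleftrightarrow> a \<in> A \<and> poly_over A p"
  unfolding poly_over_def by (auto simp: coeff_pCons split: nat.splits)

lemma poly_over_0: "0 \<in> A \<Longrightarrow> poly_over A 0"
  unfolding poly_over_def by simp


context nf_basis
begin

lemma mem_R: "x \<in> ring_of_integers K \<longleftrightarrow> x \<in> K \<and> algebraic_int x"
  unfolding ring_of_integers_def algebraic_integer_iff by simp

lemma R_0: "0 \<in> ring_of_integers K" and R_1: "1 \<in> ring_of_integers K"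
  unfolding mem_R by (auto simp: K_0 K_1 algebraic_int_1)
lemma R_add: "x \<in> ring_of_integers K \<Longrightarrow> y \<in> ring_of_integers K \<Longrightarrow> x + y \<in> ring_of_integers K"
  unfolding mem_R by (auto intro: K_add algebraic_int_add)
lemma R_diff: "x \<in> ring_of_integers K \<Longrightarrow> y \<in> ring_of_integers K \<Longrightarrow> x - y \<in> ring_of_integers K"
  unfolding mem_R by (auto intro: K_diff algebraic_int_diff)
lemma R_mult: "x \<in> ring_of_integers K \<Longrightarrow> y \<in> ring_of_integers K \<Longrightarrow> x * y \<in> ring_of_integers K"
  unfolding mem_R by (auto intro: K_mult algebraic_int_mult)
lemma R_uminus: "x \<in> ring_of_integers K \<Longrightarrow> - x \<in> ring_of_integers K"
  using R_diff[OF R_0] by simp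
lemma R_of_int: "of_int k \<in> ring_of_integers K"
  unfolding mem_R by (auto simp: K_of_int algebraic_int_of_int)

lemma R_domain: "domain (subring_structure (ring_of_integers K))"
proof -
  let ?S = "subring_structure (ring_of_integers K)"
  have c[simp]: "carrier ?S = ring_of_integers K" "mult ?S = (*)" "one ?S = 1" "zero ?S = 0" "add ?S = (+)"
    unfolding subring_structure_def by simp_all
  have ag: "abelian_group ?S"
  proof (rule abelian_groupI)
    fix x assume "x \<in> carrier ?S"
    thus "\<exists>y\<in>carrier ?S. y \<oplus>\<^bsub>?S\<^esub> x = \<zero>\<^bsub>?S\<^esub>" using R_uminus by (intro bexI[of _ "-x"]) auto
  qed (auto intro: R_add R_0 simp: algebra_simps)
  have cm: "comm_monoid ?S"
    by (rule comm_monoidI) (auto intro: R_mult R_1 simp: algebra_simps)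
  have "cring ?S"
    by (rule cringI[OF ag cm]) (simp add: algebra_simps)
  thus ?thesis by (rule domainI) auto
qed

lemma key:
  assumes H: "\<forall>f. poly_over (ring_of_integers K) f \<and> degree f \<ge> 2 \<and> decomposable_over K f \<longrightarrow> decomposable_over (ring_of_integers K) f"
    and t: "t \<in> K" and b0: "b0 \<in> ring_of_integers K" "b0 \<noteq> 0" "b0 * t \<in> ring_of_integers K"
  shows "\<exists>p0. p0 \<in> ring_of_integers K \<and> p0 \<noteq> 0 \<and> p0 * t \<in> ring_of_integers K \<and>
             (\<forall>e. e \<in> ring_of_integers K \<and> e * t \<in> ring_of_integers K \<longrightarrow> e / p0 \<in> ring_of_integers K)"
proof -
  let ?R = "ring_of_integers K"
  define P where "P = (\<lambda>p. p \<in> ?R \<and> p \<noteq> 0 \<and> p * t \<in> ?R)"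
  have "P b0" using b0 unfolding P_def by simp
  then obtain p0 where p0: "P p0" and min: "\<And>p. P p \<Longrightarrow> NZ p0 \<le> NZ p"
    using ex_has_least_nat[of P b0 NZ] by blast
  have p0R: "p0 \<in> ?R" "p0 \<noteq> 0" "p0 * t \<in> ?R" using p0 unfolding P_def by auto
  have "e / p0 \<in> ?R" if e: "e \<in> ?R" "e * t \<in> ?R" for e
  proof (cases "e = 0")
    case True thus ?thesis using R_0 by simp
  next
    case False
    define s where "s = p0^2"
    have s0: "s \<noteq> 0" using p0R unfolding s_def by simp
    define f where "f = [:0, e*t, e + s*t^2, 2*s*t, s:]"
    have fc: "f = pcompose [:0, e, s:] [:0, t, 1:]" unfolding f_def by (rule f_comp[symmetric])
    have degf: "degree f = 4" unfolding f_def using s0 by (simp add: eval_nat_numeral)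
    have "e + s * t^2 = e + (p0 * t) * (p0 * t)" unfolding s_def by (simp add: power2_eq_square algebra_simps)
    hence c2: "e + s * t^2 \<in> ?R" using e p0R by (simp add: R_add R_mult)
    have eq3: "2 * s * t = of_int 2 * p0 * (p0 * t)" unfolding s_def by (simp add: power2_eq_square algebra_simps)
    have c3: "2 * s * t \<in> ?R" unfolding eq3 by (rule R_mult[OF R_mult[OF R_of_int p0R(1)] p0R(3)])
    have c4: "s \<in> ?R" unfolding s_def power2_eq_square using p0R by (simp add: R_mult)
    have poR: "poly_over ?R f"
      unfolding f_def using R_0 e c2 c3 c4 by (simp add: poly_over_pCons poly_over_0)
    have eK: "e \<in> K" using e mem_R by blast
    have p0K: "p0 \<in> K" using p0R mem_R by blast
    have sK: "s \<in> K" unfolding s_def using p0K by (simp add: K_power)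
    have decK: "decomposable_over K f"
      unfolding decomposable_over_def
    proof (intro conjI exI)
      show "degree f \<ge> 2" using degf by simp
      show "poly_over K [:0, e, s:]" using K_0 eK sK by (simp add: poly_over_pCons poly_over_0)
      show "poly_over K [:0, t, 1:]" using K_0 K_1 t by (simp add: poly_over_pCons poly_over_0)
      show "degree [:0, e, s:] \<ge> 2" using s0 by simp
      show "degree [:0, t, 1:] \<ge> 2" by simp
      show "f = pcompose [:0, e, s:] [:0, t, 1:]" by (rule fc)
    qed
    have "decomposable_over ?R f" using H poR degf decK by simp
    then obtain G Hh where GH: "poly_over ?R G" "poly_over ?R Hh" "degree G \<ge> 2" "degree Hh \<ge> 2"
      "f = pcompose G Hh" unfolding decomposable_over_def by blast
    have "degree G * degree Hh = 4" using degf GH(5) by (simp add: degree_pcompose)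
    hence dG: "degree G = 2" and dH: "degree Hh = 2" using GH(3,4)
    proof -
      have "degree G \<le> 2"
      proof (rule ccontr)
        assume "\<not> degree G \<le> 2"
        hence "degree G * degree Hh \<ge> 3 * 2" using GH(4) by (intro mult_le_mono) auto
        thus False using \<open>degree G * degree Hh = 4\<close> by simp
      qed
      moreover have "degree Hh \<le> 2"
      proof (rule ccontr)
        assume "\<not> degree Hh \<le> 2"
        hence "degree G * degree Hh \<ge> 2 * 3" using GH(3) by (intro mult_le_mono) auto
        thus False using \<open>degree G * degree Hh = 4\<close> by simp
      qed
      ultimately show "degree G = 2" "degree Hh = 2" using GH(3,4) by auto
    qed
    define A B C where "A = Polynomial.coeff G 2" "B = Polynomial.coeff G 1" "C = Polynomial.coeff G 0"
    define p q r where "p = Polynomial.coeff Hh 2" "q = Polynomial.coeff Hh 1" "r = Polynomial.coeff Hh 0"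
    have Gf: "G = [:C, B, A:]" unfolding A_B_C_def using deg2_form[OF dG] .
    have Hf: "Hh = [:r, q, p:]" unfolding p_q_r_def using deg2_form[OF dH] .
    have A0: "A \<noteq> 0" unfolding A_B_C_def using leading_coeff_neq_0[of G] dG by fastforce
    have pz: "p \<noteq> 0" unfolding p_q_r_def using leading_coeff_neq_0[of Hh] dH by fastforce
    have inR: "A \<in> ?R" "B \<in> ?R" "p \<in> ?R" "q \<in> ?R" "r \<in> ?R"
      using GH(1,2) unfolding poly_over_def A_B_C_def p_q_r_def by auto
    have e4: "s = A * p^2" using arg_cong[OF GH(5), of "\<lambda>P. Polynomial.coeff P 4"]
      unfolding Gf Hf comp_coeffs by (simp add: f_def eval_nat_numeral)
    have e3: "2 * s * t = 2 * A * p * q" using arg_cong[OF GH(5), of "\<lambda>P. Polynomial.coeff P 3"]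
      unfolding Gf Hf comp_coeffs by (simp add: f_def eval_nat_numeral)
    have e2: "e + s * t^2 = A * (q^2 + 2 * p * r) + B * p" using arg_cong[OF GH(5), of "\<lambda>P. Polynomial.coeff P 2"]
      unfolding Gf Hf comp_coeffs by (simp add: f_def eval_nat_numeral)
    have qpt: "q = p * t"
    proof -
      have "(A * p) * q = (A * p) * (p * t)" using e3 e4 by (simp add: power2_eq_square algebra_simps) metis
      thus ?thesis using A0 pz by simp
    qed
    have ee: "e = p * (2 * A * r + B)"
      using e2 e4 qpt by (simp add: power2_eq_square algebra_simps)
    have Pp: "P p" unfolding P_def using inR pz qpt by simp
    define u where "u = p0 / p"
    have pK: "p \<in> K" using inR mem_R by blast
    have uK: "u \<in> K" unfolding u_def using p0K pK by (rule K_divide)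
    have u2: "u^2 = A" unfolding u_def using e4 pz unfolding s_def by (simp add: power_divide field_simps)
    have ua: "algebraic_int u"
      using algebraic_int_root[of A "[:0,0,1:]" u] inR(1) u2 unfolding mem_R
      by (auto simp: power2_eq_square coeff_pCons split: nat.splits)
    have u0: "u \<noteq> 0" unfolding u_def using p0R pz by simp
    have pu: "p * u = p0" unfolding u_def using pz by simp
    have unit: "algebraic_int (inverse u)"
    proof (rule ccontr)
      assume "\<not> algebraic_int (inverse u)"
      hence "NZ p < NZ (p * u)" using NZ_less[OF pK _ pz uK ua u0] inR(3) mem_R by blast
      thus False using min[OF Pp] pu by simp
    qed
    have "e / p0 = inverse u * (2 * A * r + B)" unfolding pu[symmetric] ee using pz u0 by (simp add: field_simps)
    moreover have "inverse u \<in> ?R" using unit K_inverse[OF uK] mem_R by blast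
    moreover have "2 * A * r + B \<in> ?R" using inR R_of_int[of 2] by (simp add: R_add R_mult)
    ultimately show ?thesis by (simp add: R_mult)
  qed
  thus ?thesis using p0R by blast
qed


lemma divides_G:
  assumes "x \<in> ring_of_integers K" "x \<noteq> 0" "y \<in> ring_of_integers K" "y \<noteq> 0"
  shows "x divides\<^bsub>mult_of (subring_structure (ring_of_integers K))\<^esub> y \<longleftrightarrow> y / x \<in> ring_of_integers K"
proof
  assume "x divides\<^bsub>mult_of (subring_structure (ring_of_integers K))\<^esub> y"
  then obtain c where c: "c \<in> ring_of_integers K" "y = x * c"
    unfolding factor_def by (auto simp: subring_structure_def)
  thus "y / x \<in> ring_of_integers K" using assms(2) by simp
next
  assume "y / x \<in> ring_of_integers K"
  moreover have "y = x * (y / x)" "y / x \<noteq> 0" using assms by auto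
  ultimately have "\<exists>c\<in>ring_of_integers K - {0}. y = x * c" by blast
  thus "x divides\<^bsub>mult_of (subring_structure (ring_of_integers K))\<^esub> y"
    unfolding factor_def by (simp add: subring_structure_def)
qed

lemma factorial:
  assumes H: "\<forall>f. poly_over (ring_of_integers K) f \<and> degree f \<ge> 2 \<and> decomposable_over K f \<longrightarrow> decomposable_over (ring_of_integers K) f"
  shows "factorial_domain (subring_structure (ring_of_integers K))"
proof -
  let ?R = "ring_of_integers K"
  let ?S = "subring_structure ?R"
  let ?G = "mult_of ?S"
  have carrG: "carrier ?G = ?R - {0}" by (simp add: subring_structure_def)
  interpret D: domain ?S by (rule R_domain)
  have dcc: "divisor_chain_condition_monoid ?G"
  proof unfold_locales
    have "{(x, y). x \<in> carrier ?G \<and> y \<in> carrier ?G \<and> properfactor ?G x y} \<subseteq> measure NZ"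
    proof safe
      fix x y assume xy: "x \<in> carrier ?G" "y \<in> carrier ?G" "properfactor ?G x y"
      have x: "x \<in> ?R" "x \<noteq> 0" and y: "y \<in> ?R" "y \<noteq> 0" using xy(1,2) carrG by auto
      have d1: "y / x \<in> ?R" "x / y \<notin> ?R" using xy(3) divides_G[OF x y] divides_G[OF y x]
        unfolding properfactor_def by auto
      define c where "c = y / x"
      have cR: "c \<in> K" "algebraic_int c" "c \<noteq> 0" using d1(1) x y mem_R unfolding c_def by auto
      have xK: "x \<in> K" "algebraic_int x" using x mem_R by auto
      have "inverse c = x / y" unfolding c_def by simp
      moreover have "x / y \<in> K" using xK(1) y mem_R K_divide by blast
      ultimately have nu: "\<not> algebraic_int (inverse c)" using d1(2) mem_R by auto
      have "NZ x < NZ (x * c)" by (rule NZ_less[OF xK x(2) cR nu])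
      moreover have "x * c = y" unfolding c_def using x by simp
      ultimately show "(x, y) \<in> measure NZ" by simp
    qed
    thus "wf {(x, y). x \<in> carrier ?G \<and> y \<in> carrier ?G \<and> properfactor ?G x y}"
      using wf_subset[OF wf_measure] by blast
  qed
  have gcdc: "gcd_condition_monoid ?G"
  proof unfold_locales
    fix a b assume ab: "a \<in> carrier ?G" "b \<in> carrier ?G"
    have a: "a \<in> ?R" "a \<noteq> 0" and b: "b \<in> ?R" "b \<noteq> 0" using ab carrG by auto
    define t where "t = a / b"
    have tK: "t \<in> K" unfolding t_def using a b mem_R K_divide by blast
    have bt: "b * t \<in> ?R" unfolding t_def using a b by simp
    obtain p0 where p0: "p0 \<in> ?R" "p0 \<noteq> 0" "p0 * t \<in> ?R"
      and pr: "\<And>e. e \<in> ?R \<Longrightarrow> e * t \<in> ?R \<Longrightarrow> e / p0 \<in> ?R"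
      using key[OF H tK b bt] by blast
    define d where "d = b / p0"
    have dR: "d \<in> ?R" "d \<noteq> 0" unfolding d_def using pr[OF b(1) bt] p0 b by auto
    have "d gcdof\<^bsub>?G\<^esub> a b"
      unfolding isgcd_def
    proof (intro conjI ballI impI)
      show "d divides\<^bsub>?G\<^esub> a" unfolding divides_G[OF dR a]
        using p0(3) b(2) unfolding d_def t_def by (simp add: field_simps)
      show "d divides\<^bsub>?G\<^esub> b" unfolding divides_G[OF dR b]
        using p0 b(2) unfolding d_def by simp
      fix y assume y: "y \<in> carrier ?G" "y divides\<^bsub>?G\<^esub> a \<and> y divides\<^bsub>?G\<^esub> b"
      have yR: "y \<in> ?R" "y \<noteq> 0" using y(1) carrG by auto
      have ya: "a / y \<in> ?R" and yb: "b / y \<in> ?R" using y(2) divides_G[OF yR a] divides_G[OF yR b] by auto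
      have "(b / y) * t = a / y" unfolding t_def using b(2) by simp
      hence "(b / y) / p0 \<in> ?R" using pr[OF yb] ya by metis
      moreover have "(b / y) / p0 = d / y" unfolding d_def by simp
      ultimately show "y divides\<^bsub>?G\<^esub> d" unfolding divides_G[OF yR dR] by simp
    qed
    thus "\<exists>c. c \<in> carrier ?G \<and> c gcdof\<^bsub>?G\<^esub> a b" using dR carrG by blast
  qed
  have "factorial_monoid ?G" using factorial_condition_two dcc gcdc by blast
  thus ?thesis unfolding factorial_domain_def using R_domain by blast
qed

end

theorem theorem3p1:
  fixes K :: "complex set"
  assumes "number_field K"
    and "\<not> factorial_domain (subring_structure (ring_of_integers K))"
  shows "\<exists>f. poly_over (ring_of_integers K) f \<and> Polynomial.degree f \<ge> 2 \<and>
             indecomposable_over (ring_of_integers K) f \<and> decomposable_over K f"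
proof (rule ccontr)
  assume neg: "\<not> ?thesis"
  obtain n b where "nf_basis K n b" using nf_basis_exists[OF assms(1)] by blast
  then interpret nf_basis K n b .
  have H: "\<forall>f. poly_over (ring_of_integers K) f \<and> degree f \<ge> 2 \<and> decomposable_over K f \<longrightarrow> decomposable_over (ring_of_integers K) f"
    using neg unfolding indecomposable_over_def by blast
  show False using factorial[OF H] assms(2) by blast
qed

end
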